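(* Let $d\ge 3$, let $A$ be a $d$-dimensional $(0,1)$-matrix of order $4$ equivalent to $\mathcal{M}_4^d$, and let $C$ be a filled subcube of $A$. Let $B$ be the $(0,1)$-matrix obtained from $A$ by changing exactly one zero entry lying in $C$ to $1$. Then $\operatorname{per}B>0$.
   Context: $\mathcal{M}_4^d$ has entry $1$ at $\alpha$ iff $\alpha_1+\dots+\alpha_d\equiv 0\pmod 4$, else $0$. Equivalence of matrices: obtained by permuting coordinate positions and/or applying a permutation of $\{0,1,2,3\}$ to a single coordinate, repeatedly. A diagonal is a set of $4$ indices any two of which differ in every coordinate; $\operatorname{per}B=\sum_p\prod_{\alpha\in p}b_\alpha$ over diagonals. Define $p_1,p_2,p_3:\{0,1,2,3\}\to\{0,1\}$ by $p_1(0)=p_1(1)=0,\ p_1(2)=p_1(3)=1$; $p_2(0)=p_2(2)=0,\ p_2(1)=p_2(3)=1$; $p_3(0)=p_3(3)=0,\ p_3(1)=p_3(2)=1$; and $\mu_1(0)=\mu_1(2)=0,\ \mu_1(1)=\mu_1(3)=1$; $\mu_2(0)=\mu_2(1)=0,\ \mu_2(2)=\mu_2(3)=1$; $\mu_3(0)=\mu_3(2)=0,\ \mu_3(1)=\mu_3(3)=1$. $Q_s^d=\{y\in\{0,1\}^d:w(y)\equiv s \pmod 2\}$ ($w$ = Hamming weight). For $\mathcal{E}\in\{1,2,3\}^d$, $s\in\{0,1\}$, $\lambda:Q_s^d\to\{0,1\}$, the block permutation with parameters $(\mathcal{E},\lambda,s)$ is the $(0,1)$-matrix with entry $1$ at $\alpha$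 iff $\bigoplus_i p_{\varepsilon_i}(\alpha_i)=s$ and $\bigoplus_i\mu_{\varepsilon_i}(\alpha_i)\oplus\lambda(p_{\varepsilon_1}(\alpha_1),\dots,p_{\varepsilon_d}(\alpha_d))=0$. Every matrix equivalent to $\mathcal{M}_4^d$ ($d\ge3$) is a block permutation for a unique triple of parameters $(\mathcal{E},\lambda,s)$. For these parameters, the subcubes are the index sets $C_y=\{\alpha:p_{\varepsilon_i}(\alpha_i)=y_i\ \forall i\}$, $y\in\{0,1\}^d$, and $C_y$ is called filled if $w(y)\equiv s\pmod 2$. *)

theory Defs
  imports "HOL-Combinatorics.Permutations"
begin

text \<open>A d-dimensional matrix of order 4 is a function on index lists; only its values on
  the index set idx d = {0,1,2,3}^d (lists of length d with entries < 4) matter.\<close>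

definition idx :: "nat \<Rightarrow> nat list set" where
  "idx d = {\<alpha>. length \<alpha> = d \<and> (\<forall>i<d. \<alpha> ! i < 4)}"

definition M4 :: "nat \<Rightarrow> nat list \<Rightarrow> nat" where
  "M4 d \<alpha> = (if (\<Sum>i<d. \<alpha> ! i) mod 4 = 0 then 1 else 0)"

inductive equivM4 :: "nat \<Rightarrow> (nat list \<Rightarrow> nat) \<Rightarrow> bool" for d where
  base: "equivM4 d (M4 d)"
| coord_perm: "equivM4 d A \<Longrightarrow> \<pi> permutes {..<d} \<Longrightarrow>
      equivM4 d (\<lambda>\<alpha>. A (map (\<lambda>j. \<alpha> ! \<pi> j) [0..<d]))"
| value_perm: "equivM4 d A \<Longrightarrow> \<sigma> permutes {..<4} \<Longrightarrow> i < d \<Longrightarrow>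
      equivM4 d (\<lambda>\<alpha>. A (\<alpha>[i := \<sigma> (\<alpha> ! i)]))"
| agree: "equivM4 d A \<Longrightarrow> (\<forall>\<alpha>\<in>idx d. B \<alpha> = A \<alpha>) \<Longrightarrow> equivM4 d B"

definition diagonals :: "nat \<Rightarrow> nat list set set" where
  "diagonals d = {p. p \<subseteq> idx d \<and> card p = 4 \<and>
      (\<forall>\<alpha>\<in>p. \<forall>\<beta>\<in>p. \<alpha> \<noteq> \<beta> \<longrightarrow> (\<forall>i<d. \<alpha> ! i \<noteq> \<beta> ! i))}"

definition per :: "nat \<Rightarrow> (nat list \<Rightarrow> nat) \<Rightarrow> nat" where
  "per d B = (\<Sum>p\<in>diagonals d. \<Prod>\<alpha>\<in>p. B \<alpha>)"

definition pf :: "nat \<Rightarrow> nat \<Rightarrow> nat" where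
  "pf e x = (if e = 1 then (if x = 2 \<or> x = 3 then 1 else 0)
             else if e = 2 then (if x = 1 \<or> x = 3 then 1 else 0)
             else (if x = 1 \<or> x = 2 then 1 else 0))"

definition muf :: "nat \<Rightarrow> nat \<Rightarrow> nat" where
  "muf e x = (if e = 2 then (if x = 2 \<or> x = 3 then 1 else 0)
              else (if x = 1 \<or> x = 3 then 1 else 0))"

definition binvecs :: "nat \<Rightarrow> nat list set" where
  "binvecs d = {y. length y = d \<and> (\<forall>i<d. y ! i \<le> 1)}"

definition Qs :: "nat \<Rightarrow> nat \<Rightarrow> nat list set" where
  "Qs d s = {y \<in> binvecs d. (\<Sum>i<d. y ! i) mod 2 = s}"

definition valid_params :: "nat \<Rightarrow> nat list \<Rightarrow> (nat list \<Rightarrow> nat) \<Rightarrow> nat \<Rightarrow> bool" where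
  "valid_params d E lam s \<longleftrightarrow> length E = d \<and> (\<forall>i<d. E ! i \<in> {1,2,3}) \<and> s \<in> {0,1} \<and>
      (\<forall>y\<in>Qs d s. lam y \<in> {0,1})"

definition pvec :: "nat \<Rightarrow> nat list \<Rightarrow> nat list \<Rightarrow> nat list" where
  "pvec d E \<alpha> = map (\<lambda>i. pf (E ! i) (\<alpha> ! i)) [0..<d]"

definition block_perm :: "nat \<Rightarrow> nat list \<Rightarrow> (nat list \<Rightarrow> nat) \<Rightarrow> nat \<Rightarrow> nat list \<Rightarrow> nat" where
  "block_perm d E lam s \<alpha> =
     (if (\<Sum>i<d. pf (E ! i) (\<alpha> ! i)) mod 2 = s \<and>
         ((\<Sum>i<d. muf (E ! i) (\<alpha> ! i)) + lam (pvec d E \<alpha>)) mod 2 = 0 then 1 else 0)"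

definition subcube :: "nat \<Rightarrow> nat list \<Rightarrow> nat list \<Rightarrow> nat list set" where
  "subcube d E y = {\<alpha>\<in>idx d. \<forall>i<d. pf (E ! i) (\<alpha> ! i) = y ! i}"

definition filled :: "nat \<Rightarrow> nat \<Rightarrow> nat list \<Rightarrow> bool" where
  "filled d s y \<longleftrightarrow> y \<in> binvecs d \<and> (\<Sum>i<d. y ! i) mod 2 = s"

end

theory Submission
  imports Defs
begin


definition Tm :: "nat \<Rightarrow> (nat\<Rightarrow>nat) \<Rightarrow> (nat\<Rightarrow>nat\<Rightarrow>nat) \<Rightarrow> nat list \<Rightarrow> nat list" where
  "Tm d \<pi> f \<alpha> = map (\<lambda>j. f j (\<alpha>!(\<pi> j))) [0..<d]"

lemma perm_lt: "\<pi> permutes {..<n} \<Longrightarrow> x < n \<Longrightarrow> \<pi> x < n"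
  using permutes_in_image by fastforce

lemma idx_upd: "\<alpha> \<in> idx d \<Longrightarrow> a < 4 \<Longrightarrow> \<alpha>[i := a] \<in> idx d"
  unfolding idx_def mem_Collect_eq
proof (intro conjI allI impI)
  fix j assume "length \<alpha> = d \<and> (\<forall>i<d. \<alpha> ! i < 4)" "a < 4" "j < d"
  then show "\<alpha>[i := a] ! j < 4" by (cases "i = j") auto
qed simp

lemma Tm_id: "\<alpha> \<in> idx d \<Longrightarrow> Tm d id (\<lambda>_. id) \<alpha> = \<alpha>"
  unfolding Tm_def idx_def by (auto intro!: nth_equalityI)
lemma Tm_idx: "\<pi> permutes {..<d} \<Longrightarrow> (\<forall>j<d. f j permutes {..<4}) \<Longrightarrow> \<alpha> \<in> idx d \<Longrightarrow> Tm d \<pi> f \<alpha> \<in> idx d"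
  unfolding Tm_def idx_def by (auto simp: perm_lt)

lemma Tm_comp: "\<pi> permutes {..<d} \<Longrightarrow> Tm d \<pi> f (map (\<lambda>j. \<alpha> ! \<pi>2 j) [0..<d]) = Tm d (\<pi>2 \<circ> \<pi>) f \<alpha>"
  unfolding Tm_def by (auto simp: perm_lt)

lemma Tm_val: "\<pi> permutes {..<d} \<Longrightarrow> length \<alpha> = d \<Longrightarrow> 
   Tm d \<pi> f (\<alpha>[i := \<sigma> (\<alpha> ! i)]) = Tm d \<pi> (\<lambda>j. if \<pi> j = i then f j \<circ> \<sigma> else f j) \<alpha>"
  unfolding Tm_def by (auto simp: perm_lt nth_list_update permutes_inj[THEN injD])


lemma equiv_nf: "equivM4 d A \<Longrightarrow> \<exists>\<pi> f. \<pi> permutes {..<d} \<and> (\<forall>j<d. f j permutes {..<4}) \<and>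
   (\<forall>\<alpha>\<in>idx d. A \<alpha> = M4 d (Tm d \<pi> f \<alpha>))"
proof (induction rule: equivM4.induct)
  case base
  have p1: "id permutes {..<d}" by (rule permutes_id)
  have p2: "\<forall>j<d. (\<lambda>_. id) j permutes {..<4}" using permutes_id by auto
  have p3: "\<forall>\<alpha>\<in>idx d. M4 d \<alpha> = M4 d (Tm d id (\<lambda>_. id) \<alpha>)" using Tm_id by simp
  show ?case by (rule exI, rule exI, intro conjI, rule p1, rule p2, rule p3)
next
  case (coord_perm A \<pi>2)
  then obtain \<pi> f where h: "\<pi> permutes {..<d}" "\<forall>j<d. f j permutes {..<4}"
    "\<forall>\<alpha>\<in>idx d. A \<alpha> = M4 d (Tm d \<pi> f \<alpha>)" by blast
  have "\<forall>\<alpha>\<in>idx d. A (map (\<lambda>j. \<alpha> ! \<pi>2 j) [0..<d]) = M4 d (Tm d (\<pi>2 \<circ> \<pi>) f \<alpha>)"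
  proof
    fix \<alpha> assume a: "\<alpha> \<in> idx d"
    have m: "map (\<lambda>j. \<alpha> ! \<pi>2 j) [0..<d] \<in> idx d"
      using a coord_perm(2) unfolding idx_def by (auto simp: perm_lt)
    show "A (map (\<lambda>j. \<alpha> ! \<pi>2 j) [0..<d]) = M4 d (Tm d (\<pi>2 \<circ> \<pi>) f \<alpha>)"
      using h(3) m Tm_comp[OF h(1)] by simp
  qed
  then show ?case
    apply (intro exI[where x="\<pi>2 \<circ> \<pi>"] exI[where x=f])
    using h(2) permutes_compose[OF h(1) coord_perm(2)] by (intro conjI)
next
  case (value_perm A \<sigma> i)
  then obtain \<pi> f where h: "\<pi> permutes {..<d}" "\<forall>j<d. f j permutes {..<4}"
    "\<forall>\<alpha>\<in>idx d. A \<alpha> = M4 d (Tm d \<pi> f \<alpha>)" by blast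
  define f' where "f' = (\<lambda>j. if \<pi> j = i then f j \<circ> \<sigma> else f j)"
  have "\<forall>j<d. f' j permutes {..<4}"
    unfolding f'_def using h(2) permutes_compose[OF value_perm(2)] by auto
  moreover have "\<forall>\<alpha>\<in>idx d. A (\<alpha>[i := \<sigma> (\<alpha> ! i)]) = M4 d (Tm d \<pi> f' \<alpha>)"
  proof
    fix \<alpha> assume a: "\<alpha> \<in> idx d"
    have "\<alpha> ! i < 4" using a value_perm(3) unfolding idx_def by auto
    then have m: "\<alpha>[i := \<sigma> (\<alpha> ! i)] \<in> idx d"
      using a value_perm(2) by (auto intro!: idx_upd simp: perm_lt)
    have "length \<alpha> = d" using a unfolding idx_def by auto
    then show "A (\<alpha>[i := \<sigma> (\<alpha> ! i)]) = M4 d (Tm d \<pi> f' \<alpha>)"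
      using h(3) m Tm_val[OF h(1)] unfolding f'_def by simp
  qed
  ultimately show ?case
    apply (intro exI[where x=\<pi>] exI[where x=f'])
    using h(1) by (intro conjI)
next
  case (agree A B)
  then obtain \<pi> f where h: "\<pi> permutes {..<d}" "\<forall>j<d. f j permutes {..<4}"
    "\<forall>\<alpha>\<in>idx d. A \<alpha> = M4 d (Tm d \<pi> f \<alpha>)" by blast
  then show ?case
    apply (intro exI[where x=\<pi>] exI[where x=f])
    using agree(2) by (intro conjI) auto
qed


lemma Tm_upd: "\<pi> permutes {..<d} \<Longrightarrow> length \<alpha> = d \<Longrightarrow> l < d \<Longrightarrow>
   Tm d \<pi> f (\<alpha>[\<pi> l := a]) = (Tm d \<pi> f \<alpha>)[l := f l a]"
  unfolding Tm_def by (auto intro!: nth_equalityI simp: perm_lt nth_list_update permutes_inj[THEN injD])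

lemma Tm_len: "length (Tm d \<pi> f \<alpha>) = d" unfolding Tm_def by simp

lemma Tm_nth: "j < d \<Longrightarrow> Tm d \<pi> f \<alpha> ! j = f j (\<alpha> ! \<pi> j)" unfolding Tm_def by simp

lemma Tm_surj: assumes "\<pi> permutes {..<d}" "\<forall>j<d. f j permutes {..<4}" "x \<in> idx d"
  shows "\<exists>\<beta>\<in>idx d. Tm d \<pi> f \<beta> = x"
proof
  let ?\<beta> = "map (\<lambda>l. inv (f (inv \<pi> l)) (x!(inv \<pi> l))) [0..<d]"
  have ip: "inv \<pi> permutes {..<d}" using assms(1) by (rule permutes_inv)
  have ilt: "\<And>l. l < d \<Longrightarrow> inv \<pi> l < d" using perm_lt[OF ip] by blast
  have x: "length x = d" "\<And>i. i < d \<Longrightarrow> x ! i < 4" using assms(3) unfolding idx_def by auto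
  have "\<And>l. l < d \<Longrightarrow> inv (f (inv \<pi> l)) (x!(inv \<pi> l)) < 4"
  proof -
    fix l assume "l < d"
    then have "f (inv \<pi> l) permutes {..<4}" "x!(inv \<pi> l) < 4" using assms(2) ilt x(2) by auto
    then show "inv (f (inv \<pi> l)) (x!(inv \<pi> l)) < 4" using perm_lt[OF permutes_inv] by blast
  qed
  then show "?\<beta> \<in> idx d" unfolding idx_def by auto
  show "Tm d \<pi> f ?\<beta> = x"
  proof (rule nth_equalityI)
    show "length (Tm d \<pi> f ?\<beta>) = length x" using x Tm_len by simp
    fix j assume "j < length (Tm d \<pi> f ?\<beta>)"
    then have j: "j < d" by (simp add: Tm_len)
    have "Tm d \<pi> f ?\<beta> ! j = f j (inv (f (inv \<pi> (\<pi> j))) (x!(inv \<pi> (\<pi> j))))"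
      using j perm_lt[OF assms(1)] by (simp add: Tm_nth)
    also have "\<dots> = f j (inv (f j) (x!j))" using permutes_inverses[OF assms(1)] by simp
    also have "\<dots> = x ! j" using permutes_inverses(1)[of "f j"] assms(2) j by auto
    finally show "Tm d \<pi> f ?\<beta> ! j = x ! j" .
  qed
qed

lemma Tm_diff: assumes "\<pi> permutes {..<d}" "\<forall>j<d. Tm d \<pi> f \<alpha> ! j \<noteq> Tm d \<pi> f \<beta> ! j"
  shows "\<forall>l<d. \<alpha> ! l \<noteq> \<beta> ! l"
proof (intro allI impI)
  fix l assume l: "l < d"
  have ip: "inv \<pi> permutes {..<d}" using assms(1) by (rule permutes_inv)
  have j: "inv \<pi> l < d" using perm_lt[OF ip l] .
  have pj: "\<pi> (inv \<pi> l) = l" using permutes_inverses[OF assms(1)] by simp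
  show "\<alpha> ! l \<noteq> \<beta> ! l" using assms(2) j Tm_nth[OF j] pj by metis
qed

lemma sum_upd: fixes g :: "nat \<Rightarrow> nat \<Rightarrow> nat" assumes "i < d" "length \<alpha> = d"
  shows "(\<Sum>l<d. g l (\<alpha>[i:=a]!l)) + g i (\<alpha>!i) = (\<Sum>l<d. g l (\<alpha>!l)) + g i a"
proof -
  have True: "i < length \<alpha>" using assms by simp
  have fin: "finite {..<d}" by simp
  have i: "i \<in> {..<d}" using assms by simp
  have e1: "(\<Sum>l<d. g l (\<alpha>[i:=a]!l)) = g i a + (\<Sum>l\<in>{..<d}-{i}. g l (\<alpha>[i:=a]!l))"
    using sum.remove[OF fin i, of "\<lambda>l. g l (\<alpha>[i:=a]!l)"] True by simp
  have e2: "(\<Sum>l<d. g l (\<alpha>!l)) = g i (\<alpha>!i) + (\<Sum>l\<in>{..<d}-{i}. g l (\<alpha>!l))"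
    using sum.remove[OF fin i] by simp
  have e3: "(\<Sum>l\<in>{..<d}-{i}. g l (\<alpha>[i:=a]!l)) = (\<Sum>l\<in>{..<d}-{i}. g l (\<alpha>!l))"
    by (rule sum.cong) auto
  show ?thesis using e1 e2 e3 by linarith
qed


definition PS :: "nat \<Rightarrow> nat list \<Rightarrow> nat list \<Rightarrow> nat" where
  "PS d E \<alpha> = (\<Sum>i<d. pf (E ! i) (\<alpha> ! i))"
definition MS :: "nat \<Rightarrow> nat list \<Rightarrow> nat list \<Rightarrow> nat" where
  "MS d E \<alpha> = (\<Sum>i<d. muf (E ! i) (\<alpha> ! i))"

lemma bp_eq: "block_perm d E lam s \<alpha> =
  (if PS d E \<alpha> mod 2 = s \<and> (MS d E \<alpha> + lam (pvec d E \<alpha>)) mod 2 = 0 then 1 else 0)"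
  unfolding block_perm_def PS_def MS_def by simp

lemma pf_le: "pf e x \<le> 1" unfolding pf_def by auto
lemma muf_le: "muf e x \<le> 1" unfolding muf_def by auto

lemma step1:
  assumes Ab: "\<forall>\<alpha>\<in>idx d. A \<alpha> = block_perm d E lam s \<alpha>"
    and a0: "\<alpha>0 \<in> idx d" and P0: "PS d E \<alpha>0 mod 2 = s"
    and M0: "(MS d E \<alpha>0 + lam (pvec d E \<alpha>0)) mod 2 \<noteq> 0"
    and t: "t < d" and v: "v < 4" and h: "A (\<alpha>0[t:=v]) = 1"
  shows "pf (E!t) v = pf (E!t) (\<alpha>0!t)" "muf (E!t) v \<noteq> muf (E!t) (\<alpha>0!t)"
    "pvec d E (\<alpha>0[t:=v]) = pvec d E \<alpha>0"
proof -
  have len: "length \<alpha>0 = d" using a0 unfolding idx_def by auto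
  have i1: "\<alpha>0[t:=v] \<in> idx d" using idx_upd[OF a0 v] .
  have b1: "block_perm d E lam s (\<alpha>0[t:=v]) = 1" using Ab i1 h by auto
  then have c1: "PS d E (\<alpha>0[t:=v]) mod 2 = s" and
     c2: "(MS d E (\<alpha>0[t:=v]) + lam (pvec d E (\<alpha>0[t:=v]))) mod 2 = 0"
    unfolding bp_eq by (auto split: if_splits)
  have u1: "PS d E (\<alpha>0[t:=v]) + pf (E!t) (\<alpha>0!t) = PS d E \<alpha>0 + pf (E!t) v"
    unfolding PS_def using sum_upd[OF t len, of "\<lambda>l x. pf (E!l) x"] by simp
  have u2: "MS d E (\<alpha>0[t:=v]) + muf (E!t) (\<alpha>0!t) = MS d E \<alpha>0 + muf (E!t) v"
    unfolding MS_def using sum_upd[OF t len, of "\<lambda>l x. muf (E!l) x"] by simp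
  show e: "pf (E!t) v = pf (E!t) (\<alpha>0!t)"
    using c1 P0 u1 pf_le[of "E!t" v] pf_le[of "E!t" "\<alpha>0!t"] by presburger
  show pv: "pvec d E (\<alpha>0[t:=v]) = pvec d E \<alpha>0"
    unfolding pvec_def
  proof (rule map_cong[OF refl])
    fix x assume "x \<in> set [0..<d]"
    then have "x < d" by simp
    then show "pf (E ! x) (\<alpha>0[t := v] ! x) = pf (E ! x) (\<alpha>0 ! x)"
      using e len by (cases "x = t") auto
  qed
  show "muf (E!t) v \<noteq> muf (E!t) (\<alpha>0!t)"
  proof -
    have c2': "(MS d E (\<alpha>0[t:=v]) + lam (pvec d E \<alpha>0)) mod 2 = 0" using c2 pv by simp
    show ?thesis using c2' M0 u2 muf_le[of "E!t" v] muf_le[of "E!t" "\<alpha>0!t"] by presburger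
  qed
qed


lemma triple:
  assumes Ab: "\<forall>\<alpha>\<in>idx d. A \<alpha> = block_perm d E lam s \<alpha>"
    and a0: "\<alpha>0 \<in> idx d" and P0: "PS d E \<alpha>0 mod 2 = s"
    and M0: "(MS d E \<alpha>0 + lam (pvec d E \<alpha>0)) mod 2 \<noteq> 0"
    and ijk: "i < d" "j < d" "k < d" "i \<noteq> j" "i \<noteq> k" "j \<noteq> k"
    and abc: "a < 4" "b < 4" "c < 4"
    and h: "A (\<alpha>0[i:=a]) = 1" "A (\<alpha>0[j:=b]) = 1" "A (\<alpha>0[k:=c]) = 1"
  shows "A (\<alpha>0[i:=a, j:=b, k:=c]) = 1"
proof -
  note si = step1[OF Ab a0 P0 M0 ijk(1) abc(1) h(1)]
  note sj = step1[OF Ab a0 P0 M0 ijk(2) abc(2) h(2)]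
  note sk = step1[OF Ab a0 P0 M0 ijk(3) abc(3) h(3)]
  have len: "length \<alpha>0 = d" using a0 unfolding idx_def by auto
  let ?\<gamma> = "\<alpha>0[i:=a, j:=b, k:=c]"
  have ig: "?\<gamma> \<in> idx d" using a0 abc by (intro idx_upd) auto
  have gx: "\<And>x. x < d \<Longrightarrow> ?\<gamma> ! x = (if x = k then c else if x = j then b else if x = i then a else \<alpha>0 ! x)"
    using len ijk by (auto simp: nth_list_update)
  have pfe: "\<And>x. x < d \<Longrightarrow> pf (E ! x) (?\<gamma> ! x) = pf (E ! x) (\<alpha>0 ! x)"
    using gx si(1) sj(1) sk(1) by auto
  have pv: "pvec d E ?\<gamma> = pvec d E \<alpha>0"
    unfolding pvec_def by (rule map_cong[OF refl]) (simp add: pfe)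
  have ps: "PS d E ?\<gamma> = PS d E \<alpha>0"
    unfolding PS_def by (rule sum.cong[OF refl]) (simp add: pfe)
  have u1: "MS d E (\<alpha>0[i:=a]) + muf (E!i) (\<alpha>0!i) = MS d E \<alpha>0 + muf (E!i) a"
    unfolding MS_def using sum_upd[OF ijk(1) len, of "\<lambda>l x. muf (E!l) x"] by simp
  have u2: "MS d E (\<alpha>0[i:=a, j:=b]) + muf (E!j) (\<alpha>0!j) = MS d E (\<alpha>0[i:=a]) + muf (E!j) b"
    unfolding MS_def using sum_upd[OF ijk(2), of "\<alpha>0[i:=a]" "\<lambda>l x. muf (E!l) x"] len ijk by simp
  have u3: "MS d E ?\<gamma> + muf (E!k) (\<alpha>0!k) = MS d E (\<alpha>0[i:=a, j:=b]) + muf (E!k) c"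
    unfolding MS_def using sum_upd[OF ijk(3), of "\<alpha>0[i:=a, j:=b]" "\<lambda>l x. muf (E!l) x"] len ijk by simp
  have "(MS d E ?\<gamma> + lam (pvec d E \<alpha>0)) mod 2 = 0"
    using u1 u2 u3 M0 si(2) sj(2) sk(2) muf_le[of "E!i" a] muf_le[of "E!i" "\<alpha>0!i"]
      muf_le[of "E!j" b] muf_le[of "E!j" "\<alpha>0!j"] muf_le[of "E!k" c] muf_le[of "E!k" "\<alpha>0!k"]
    by presburger
  then have "block_perm d E lam s ?\<gamma> = 1" unfolding bp_eq using pv ps P0 by simp
  then show ?thesis using Ab ig by simp
qed


lemma diag4:
  assumes "d > 0" "z0 \<in> idx d" "z1 \<in> idx d" "z2 \<in> idx d" "z3 \<in> idx d"
    and d01: "\<forall>i<d. z0!i \<noteq> z1!i" and d02: "\<forall>i<d. z0!i \<noteq> z2!i" and d03: "\<forall>i<d. z0!i \<noteq> z3!i"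
    and d12: "\<forall>i<d. z1!i \<noteq> z2!i" and d13: "\<forall>i<d. z1!i \<noteq> z3!i" and d23: "\<forall>i<d. z2!i \<noteq> z3!i"
  shows "{z0, z1, z2, z3} \<in> diagonals d"
proof -
  have n: "z0 \<noteq> z1" "z0 \<noteq> z2" "z0 \<noteq> z3" "z1 \<noteq> z2" "z1 \<noteq> z3" "z2 \<noteq> z3"
    using d01 d02 d03 d12 d13 d23 assms(1) by fastforce+
  have c: "card {z0, z1, z2, z3} = 4" using n by simp
  have s: "\<forall>i<d. z1!i \<noteq> z0!i" "\<forall>i<d. z2!i \<noteq> z0!i" "\<forall>i<d. z3!i \<noteq> z0!i"
     "\<forall>i<d. z2!i \<noteq> z1!i" "\<forall>i<d. z3!i \<noteq> z1!i" "\<forall>i<d. z3!i \<noteq> z2!i"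
    using d01 d02 d03 d12 d13 d23 by auto
  have p: "\<forall>\<alpha>\<in>{z0, z1, z2, z3}. \<forall>\<beta>\<in>{z0, z1, z2, z3}. \<alpha> \<noteq> \<beta> \<longrightarrow> (\<forall>i<d. \<alpha> ! i \<noteq> \<beta> ! i)"
    using d01 d02 d03 d12 d13 d23 s by simp
  have sub: "{z0, z1, z2, z3} \<subseteq> idx d" using assms(2-5) by simp
  show ?thesis unfolding diagonals_def using sub c p by blast
qed

lemma finite_idx: "finite (idx d)"
proof -
  have "idx d \<subseteq> {xs. set xs \<subseteq> {..<4} \<and> length xs = d}"
    unfolding idx_def by (auto simp: in_set_conv_nth)
  then show ?thesis using finite_lists_length_eq[of "{..<4::nat}" d] finite_subset by auto
qed

lemma per_pos: assumes "D \<in> diagonals d" "\<forall>\<beta>\<in>D. B \<beta> > 0" shows "per d B > 0"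
proof -
  have f: "finite (diagonals d)"
    using finite_idx unfolding diagonals_def by (auto intro: finite_subset[of _ "Pow (idx d)"])
  have "prod B D \<le> per d B" unfolding per_def by (rule member_le_sum[OF assms(1) _ f]) simp
  moreover have "prod B D > 0" using assms(2) by (simp add: prod_pos)
  ultimately show ?thesis by simp
qed

definition cc :: "nat \<Rightarrow> nat \<Rightarrow> nat" where
  "cc j i = (if i = 0 then j else if i = 1 then j mod 3 + 1 else if i = 2 then (j+1) mod 3 + 1
            else if odd i then j else 4 - j)"

lemma cc_sum: "j \<in> {1,2,3} \<Longrightarrow> (\<Sum>i<3+2*m. cc j i) = 6 + 4*m"
proof (induction m)
  case 0
  have l3: "{..<3::nat} = {0,1,2}" by auto
  have e: "(\<Sum>i<3. cc j i) = cc j 0 + cc j 1 + cc j 2" unfolding l3 by simp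
  have v: "cc j 0 = j" "cc j 1 = j mod 3 + 1" "cc j 2 = (j+1) mod 3 + 1" by (simp_all add: cc_def)
  have "j mod 3 + (j+1) mod 3 + j = 4" using 0 by auto
  then show ?case using e v by simp
next
  case (Suc m)
  have e: "3 + 2 * Suc m = Suc (Suc (3 + 2*m))" by simp
  have c1: "cc j (3 + 2*m) = j" unfolding cc_def by simp
  have c2: "cc j (Suc (3 + 2*m)) = 4 - j" unfolding cc_def by simp
  have "(\<Sum>i<3+2*Suc m. cc j i) = (\<Sum>i<3+2*m. cc j i) + cc j (3+2*m) + cc j (Suc (3+2*m))"
    unfolding e by (simp only: sum.lessThan_Suc)
  also have "\<dots> = 6 + 4*m + j + (4 - j)" using Suc c1 c2 by simp
  finally show ?case using Suc.prems by auto
qed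
lemma cc_range: "j \<in> {1,2,3} \<Longrightarrow> 1 \<le> cc j i \<and> cc j i \<le> 3"
  unfolding cc_def by (cases "j = 1"; cases "j = 2"; simp)

lemma cc_inj: "j \<in> {1,2,3} \<Longrightarrow> k \<in> {1,2,3} \<Longrightarrow> j \<noteq> k \<Longrightarrow> cc j i \<noteq> cc k i"
  unfolding cc_def by (cases "j = 1"; cases "j = 2"; cases "k = 1"; cases "k = 2"; simp)

definition ee :: "nat \<Rightarrow> nat \<Rightarrow> nat" where
  "ee j i = (if even i then j else (4 - j) mod 4)"

lemma ee_step: "j < 4 \<Longrightarrow> ((S::nat) + j + (4 - j) mod 4) mod 4 = S mod 4"
  by (cases "j = 0") (auto simp: mod_add_right_eq[symmetric])

lemma ee_sum: "j < 4 \<Longrightarrow> (\<Sum>i<2*m. ee j i) mod 4 = 0"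
proof (induction m)
  case 0
  then show ?case by simp
next
  case (Suc m)
  have e: "2 * Suc m = Suc (Suc (2*m))" by simp
  have c1: "ee j (2*m) = j" unfolding ee_def by simp
  have c2: "ee j (Suc (2*m)) = (4 - j) mod 4" unfolding ee_def by simp
  have "(\<Sum>i<2*Suc m. ee j i) = (\<Sum>i<2*m. ee j i) + ee j (2*m) + ee j (Suc (2*m))"
    unfolding e by (simp only: sum.lessThan_Suc)
  also have "\<dots> = (\<Sum>i<2*m. ee j i) + j + (4 - j) mod 4" using c1 c2 by simp
  finally have eq: "(\<Sum>i<2*Suc m. ee j i) = (\<Sum>i<2*m. ee j i) + j + (4 - j) mod 4" .
  show ?case unfolding eq ee_step[OF Suc.prems] using Suc by simp
qed

lemma M4_eq: "M4 d \<alpha> = (if (\<Sum>i<d. \<alpha> ! i) mod 4 = 0 then 1 else 0)" by (simp add: M4_def)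

lemma sum_map: "(\<Sum>i<d. map g [0..<d] ! i) = (\<Sum>i<d. g i)"
  by (rule sum.cong) auto



lemma fin4: "(j::nat) < 4 \<Longrightarrow> j = 0 \<or> j = 1 \<or> j = 2 \<or> j = 3" by linarith

lemma ee_inj: "j < 4 \<Longrightarrow> k < 4 \<Longrightarrow> j \<noteq> k \<Longrightarrow> ee j i \<noteq> ee k i"
  unfolding ee_def by (drule fin4, drule fin4, auto)

lemma ee_lt: "j < 4 \<Longrightarrow> ee j i < 4"
  unfolding ee_def by simp
lemma even_case:
  assumes hp: "\<pi> permutes {..<d}" and hf: "\<forall>j<d. f j permutes {..<4}"
    and h3: "\<forall>\<alpha>\<in>idx d. A \<alpha> = M4 d (Tm d \<pi> f \<alpha>)"
    and ev: "even d" and dp: "d > 0" and z: "A \<alpha>0 = 0"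
  shows "\<exists>D\<in>diagonals d. \<forall>\<beta>\<in>D. A \<beta> = 1 \<and> \<beta> \<noteq> \<alpha>0"
proof -
  obtain m where dm: "d = 2*m" using ev by blast
  define w where "w = (\<lambda>j. map (ee j) [0..<d])"
  have wi: "\<And>j. j < 4 \<Longrightarrow> w j \<in> idx d" unfolding w_def idx_def using ee_lt by auto
  have wm: "\<And>j. j < 4 \<Longrightarrow> M4 d (w j) = 1"
    unfolding w_def M4_eq sum_map using ee_sum dm by simp
  have wd: "\<forall>i<d. w j ! i \<noteq> w k ! i" if "j < 4" "k < 4" "j \<noteq> k" for j k
    unfolding w_def using ee_inj[OF that] by simp
  obtain b0 where b0: "b0 \<in> idx d" "Tm d \<pi> f b0 = w 0" using Tm_surj[OF hp hf wi[of 0]] by auto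
  obtain b1 where b1: "b1 \<in> idx d" "Tm d \<pi> f b1 = w 1" using Tm_surj[OF hp hf wi[of 1]] by auto
  obtain b2 where b2: "b2 \<in> idx d" "Tm d \<pi> f b2 = w 2" using Tm_surj[OF hp hf wi[of 2]] by auto
  obtain b3 where b3: "b3 \<in> idx d" "Tm d \<pi> f b3 = w 3" using Tm_surj[OF hp hf wi[of 3]] by auto
  have dif: "\<forall>l<d. u!l \<noteq> v!l" if "Tm d \<pi> f u = w j" "Tm d \<pi> f v = w k" "j<4" "k<4" "j\<noteq>k" for u v j k
  proof -
    have "\<forall>i<d. Tm d \<pi> f u ! i \<noteq> Tm d \<pi> f v ! i" unfolding that(1,2) using wd[OF that(3-5)] .
    then show ?thesis by (rule Tm_diff[OF hp])
  qed
  have D: "{b0, b1, b2, b3} \<in> diagonals d"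
  proof (rule diag4[OF dp b0(1) b1(1) b2(1) b3(1)])
    show "\<forall>i<d. b0 ! i \<noteq> b1 ! i" by (rule dif[OF b0(2) b1(2)]) simp_all
    show "\<forall>i<d. b0 ! i \<noteq> b2 ! i" by (rule dif[OF b0(2) b2(2)]) simp_all
    show "\<forall>i<d. b0 ! i \<noteq> b3 ! i" by (rule dif[OF b0(2) b3(2)]) simp_all
    show "\<forall>i<d. b1 ! i \<noteq> b2 ! i" by (rule dif[OF b1(2) b2(2)]) simp_all
    show "\<forall>i<d. b1 ! i \<noteq> b3 ! i" by (rule dif[OF b1(2) b3(2)]) simp_all
    show "\<forall>i<d. b2 ! i \<noteq> b3 ! i" by (rule dif[OF b2(2) b3(2)]) simp_all
  qed
  have "A b0 = 1" "A b1 = 1" "A b2 = 1" "A b3 = 1"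
    using h3 b0 b1 b2 b3 wm by simp_all
  then have "\<forall>\<beta>\<in>{b0, b1, b2, b3}. A \<beta> = 1 \<and> \<beta> \<noteq> \<alpha>0" using z by auto
  then show ?thesis using D by blast
qed


lemma l1: "(T::nat) + x = 4*a + r + y \<Longrightarrow> x + 4 = 4*b + y + r \<Longrightarrow> T = 4*c + t \<Longrightarrow> t < 4 \<Longrightarrow> t = 0"
  by presburger

lemma l2: "(T::nat) + x0 + x1 + x2 = 4*a + r + (y0 + y1 + y2) \<Longrightarrow> x0 + 4 = 4*b0 + y0 + r \<Longrightarrow>
  x1 + 4 = 4*b1 + y1 + r \<Longrightarrow> x2 + 4 = 4*b2 + y2 + r \<Longrightarrow> T = 4*c \<Longrightarrow> r < 4 \<Longrightarrow> r \<noteq> 0 \<Longrightarrow> r = 2"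
proof -
  assume h: "(T::nat) + x0 + x1 + x2 = 4*a + r + (y0 + y1 + y2)" "x0 + 4 = 4*b0 + y0 + r"
    "x1 + 4 = 4*b1 + y1 + r" "x2 + 4 = 4*b2 + y2 + r" "T = 4*c" "r < 4" "r \<noteq> 0"
  then have e: "4*c + 4*b0 + 4*b1 + 4*b2 + 2*r = 4*a + 12" by linarith
  show "r = 2"
  proof (rule ccontr)
    assume "r \<noteq> 2"
    then have "r = 1 \<or> r = 3" using h(6,7) by linarith
    then show False using e by presburger
  qed
qed

lemma decomp: "(r::nat) < 4 \<Longrightarrow> \<exists>b. x + 4 = 4*b + (x + 4 - r) mod 4 + r"
proof -
  assume r: "r < 4"
  have "(x + 4 - r) div 4 * 4 + (x + 4 - r) mod 4 = x + 4 - r" by (rule div_mult_mod_eq)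
  then have "x + 4 = 4*((x + 4 - r) div 4) + (x + 4 - r) mod 4 + r" using r by linarith
  then show ?thesis by blast
qed

lemma decS: "\<exists>a. (S::nat) = 4*a + S mod 4"
  using div_mult_mod_eq[of S 4] by (intro exI[of _ "S div 4"]) linarith

lemma mod_fact1: "(x::nat) < 4 \<Longrightarrow> r = S mod 4 \<Longrightarrow> T + x = S + (x + 4 - r) mod 4 \<Longrightarrow> T mod 4 = 0"
proof -
  assume x: "x < 4" and r: "r = S mod 4" and e: "T + x = S + (x + 4 - r) mod 4"
  have r4: "r < 4" using r by simp
  obtain a where a: "S = 4*a + r" using decS[of S] r by blast
  obtain b where b: "x + 4 = 4*b + (x + 4 - r) mod 4 + r" using decomp[OF r4] by blast
  obtain c where c: "T = 4*c + T mod 4" using decS[of T] by blast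
  show "T mod 4 = 0" by (rule l1[of T x a r _ b c]) (use e a b c in simp_all)
qed

lemma odd_r2:
  assumes hp: "\<pi> permutes {..<d}" and hf: "\<forall>j<d. f j permutes {..<4}"
    and h3: "\<forall>\<alpha>\<in>idx d. A \<alpha> = M4 d (Tm d \<pi> f \<alpha>)"
    and d3: "d \<ge> 3" and a0: "\<alpha>0 \<in> idx d" and z: "A \<alpha>0 = 0"
    and good: "\<And>i j k a b c. i<d \<Longrightarrow> j<d \<Longrightarrow> k<d \<Longrightarrow> i\<noteq>j \<Longrightarrow> i\<noteq>k \<Longrightarrow> j\<noteq>k \<Longrightarrow>
        a<4 \<Longrightarrow> b<4 \<Longrightarrow> c<4 \<Longrightarrow> A (\<alpha>0[i:=a]) = 1 \<Longrightarrow> A (\<alpha>0[j:=b]) = 1 \<Longrightarrow> A (\<alpha>0[k:=c]) = 1 \<Longrightarrow>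
        A (\<alpha>0[i:=a, j:=b, k:=c]) = 1"
  shows "(\<Sum>i<d. Tm d \<pi> f \<alpha>0 ! i) mod 4 = 2"
proof -
  define x0 where "x0 = Tm d \<pi> f \<alpha>0"
  define S where "S = (\<Sum>i<d. x0 ! i)"
  define r where "r = S mod 4"
  have len: "length \<alpha>0 = d" using a0 unfolding idx_def by auto
  have x0i: "x0 \<in> idx d" unfolding x0_def using Tm_idx[OF hp hf a0] .
  have lx: "length x0 = d" using x0i unfolding idx_def by auto
  have x0lt: "\<And>l. l < d \<Longrightarrow> x0 ! l < 4" using x0i unfolding idx_def by auto
  have "M4 d x0 = 0" using h3 a0 z unfolding x0_def by simp
  then have r0: "r \<noteq> 0" unfolding r_def S_def M4_eq by (auto split: if_splits)
  define a where "a = (\<lambda>l. (x0!l + 4 - r) mod 4)"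
  define a' where "a' = (\<lambda>l. inv (f l) (a l))"
  have alt: "a l < 4" for l unfolding a_def by simp
  have a'lt: "a' l < 4" if "l < d" for l
    unfolding a'_def using perm_lt[OF permutes_inv[of "f l"] alt] hf that by auto
  have fa': "f l (a' l) = a l" if "l < d" for l
    unfolding a'_def using permutes_inverses(1)[of "f l"] hf that by auto
  have one: "A (\<alpha>0[\<pi> l := a' l]) = 1" if l: "l < d" for l
  proof -
    have "Tm d \<pi> f (\<alpha>0[\<pi> l := a' l]) = x0[l := a l]"
      unfolding x0_def using Tm_upd[OF hp len l] fa'[OF l] by simp
    moreover have "M4 d (x0[l := a l]) = 1"
    proof -
      have "(\<Sum>i<d. x0[l := a l] ! i) + x0 ! l = S + a l"
        unfolding S_def using sum_upd[OF l lx, of "\<lambda>_ x. x"] by simp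
      then have "(\<Sum>i<d. x0[l := a l] ! i) mod 4 = 0"
        using mod_fact1[OF x0lt[OF l] r_def] unfolding a_def by blast
      then show ?thesis unfolding M4_eq by simp
    qed
    moreover have "\<alpha>0[\<pi> l := a' l] \<in> idx d" using idx_upd[OF a0 a'lt[OF l]] .
    ultimately show ?thesis using h3 by simp
  qed
  have inj: "inj \<pi>" using hp by (rule permutes_inj)
  have d012: "0 < d" "1 < d" "2 < d" using d3 by auto
  have pd: "\<pi> 0 < d" "\<pi> 1 < d" "\<pi> 2 < d" using perm_lt[OF hp] d012 by auto
  have pne: "\<pi> 0 \<noteq> \<pi> 1" "\<pi> 0 \<noteq> \<pi> 2" "\<pi> 1 \<noteq> \<pi> 2"
    using injD[OF inj, of 0 1] injD[OF inj, of 0 2] injD[OF inj, of 1 2] by auto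
  have g: "A (\<alpha>0[\<pi> 0 := a' 0, \<pi> 1 := a' 1, \<pi> 2 := a' 2]) = 1"
    by (rule good[OF pd pne a'lt[OF d012(1)] a'lt[OF d012(2)] a'lt[OF d012(3)]
        one[OF d012(1)] one[OF d012(2)] one[OF d012(3)]])
  define g1 where "g1 = \<alpha>0[\<pi> 0 := a' 0]"
  define g2 where "g2 = g1[\<pi> 1 := a' 1]"
  define g3 where "g3 = g2[\<pi> 2 := a' 2]"
  have g1i: "g1 \<in> idx d" unfolding g1_def by (rule idx_upd[OF a0 a'lt[OF d012(1)]])
  have g2i: "g2 \<in> idx d" unfolding g2_def by (rule idx_upd[OF g1i a'lt[OF d012(2)]])
  have g3i: "g3 \<in> idx d" unfolding g3_def by (rule idx_upd[OF g2i a'lt[OF d012(3)]])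
  have lg: "length g1 = d" "length g2 = d" using g1i g2i unfolding idx_def by auto
  have t1: "Tm d \<pi> f g1 = x0[0 := a 0]"
    unfolding g1_def x0_def using Tm_upd[OF hp len d012(1)] fa'[OF d012(1)] by simp
  have t2: "Tm d \<pi> f g2 = x0[0 := a 0, 1 := a 1]"
    unfolding g2_def using Tm_upd[OF hp lg(1) d012(2)] fa'[OF d012(2)] t1 by simp
  have t3: "Tm d \<pi> f g3 = x0[0 := a 0, 1 := a 1, 2 := a 2]"
    unfolding g3_def using Tm_upd[OF hp lg(2) d012(3)] fa'[OF d012(3)] t2 by simp
  have "A g3 = 1" using g unfolding g3_def g2_def g1_def .
  then have m: "M4 d (x0[0 := a 0, 1 := a 1, 2 := a 2]) = 1" using h3 g3i t3 by simp
  define y1 where "y1 = x0[0 := a 0]"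
  define y2 where "y2 = y1[1 := a 1]"
  define y3 where "y3 = y2[2 := a 2]"
  have ly: "length y1 = d" "length y2 = d" unfolding y1_def y2_def using lx by auto
  have y1v: "y1 ! 1 = x0 ! 1" unfolding y1_def by simp
  have y2v: "y2 ! 2 = x0 ! 2" unfolding y2_def y1_def by simp
  have s1: "(\<Sum>i<d. y1 ! i) + x0 ! 0 = S + a 0"
    unfolding S_def y1_def using sum_upd[OF d012(1) lx, of "\<lambda>_ x. x" "a 0"] by simp
  have s2: "(\<Sum>i<d. y2 ! i) + x0 ! 1 = (\<Sum>i<d. y1 ! i) + a 1"
    unfolding y2_def using sum_upd[OF d012(2) ly(1), of "\<lambda>_ x. x" "a 1"] y1v by simp
  have s3: "(\<Sum>i<d. y3 ! i) + x0 ! 2 = (\<Sum>i<d. y2 ! i) + a 2"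
    unfolding y3_def using sum_upd[OF d012(3) ly(2), of "\<lambda>_ x. x" "a 2"] y2v by simp
  have y3e: "y3 = x0[0 := a 0, 1 := a 1, 2 := a 2]" unfolding y3_def y2_def y1_def by simp
  have s4: "(\<Sum>i<d. y3 ! i) mod 4 = 0"
  proof (rule ccontr)
    assume "(\<Sum>i<d. y3 ! i) mod 4 \<noteq> 0"
    then have "M4 d y3 = 0" unfolding M4_eq by simp
    then show False using m y3e by simp
  qed
  have r4: "r < 4" unfolding r_def by simp
  obtain q where q: "S = 4*q + r" using decS[of S] r_def by blast
  obtain b0 where b0: "x0!0 + 4 = 4*b0 + a 0 + r" using decomp[OF r4] unfolding a_def by blast
  obtain b1 where b1: "x0!1 + 4 = 4*b1 + a 1 + r" using decomp[OF r4] unfolding a_def by blast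
  obtain b2 where b2: "x0!2 + 4 = 4*b2 + a 2 + r" using decomp[OF r4] unfolding a_def by blast
  obtain c where c: "(\<Sum>i<d. y3 ! i) = 4*c" using decS[of "\<Sum>i<d. y3 ! i"] s4 by auto
  have e1: "(\<Sum>i<d. y3 ! i) + x0!0 + x0!1 + x0!2 = 4*q + r + (a 0 + a 1 + a 2)"
    using s1 s2 s3 q by linarith
  have "r = 2" by (rule l2[OF e1 b0 b1 b2 c r4 r0])
  then show ?thesis unfolding r_def S_def x0_def .
qed


lemma md1: "(x::nat) < 4 \<Longrightarrow> 1 \<le> c \<Longrightarrow> c \<le> 3 \<Longrightarrow> x \<noteq> (x + c) mod 4"
proof -
  assume "x < 4" "1 \<le> c" "c \<le> 3"
  then have "x = 0 \<or> x = 1 \<or> x = 2 \<or> x = 3" "c = 1 \<or> c = 2 \<or> c = 3" by linarith+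
  then show ?thesis by (elim disjE) simp_all
qed

lemma md2: "(x::nat) < 4 \<Longrightarrow> 1 \<le> c \<Longrightarrow> c \<le> 3 \<Longrightarrow> 1 \<le> c' \<Longrightarrow> c' \<le> 3 \<Longrightarrow> c \<noteq> c' \<Longrightarrow>
   (x + c) mod 4 \<noteq> (x + c') mod 4"
proof -
  assume "x < 4" "1 \<le> c" "c \<le> 3" "1 \<le> c'" "c' \<le> 3" "c \<noteq> c'"
  then have "x = 0 \<or> x = 1 \<or> x = 2 \<or> x = 3" "c = 1 \<or> c = 2 \<or> c = 3" "c' = 1 \<or> c' = 2 \<or> c' = 3"
    by linarith+
  then show ?thesis using \<open>c \<noteq> c'\<close> by (elim disjE) simp_all
qed

lemma odd_case:
  assumes hp: "\<pi> permutes {..<d}" and hf: "\<forall>j<d. f j permutes {..<4}"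
    and h3: "\<forall>\<alpha>\<in>idx d. A \<alpha> = M4 d (Tm d \<pi> f \<alpha>)"
    and od: "odd d" and d3: "d \<ge> 3" and a0: "\<alpha>0 \<in> idx d"
    and r2: "(\<Sum>i<d. Tm d \<pi> f \<alpha>0 ! i) mod 4 = 2"
  shows "\<exists>D\<in>diagonals d. \<alpha>0 \<in> D \<and> (\<forall>\<beta>\<in>D. \<beta> \<noteq> \<alpha>0 \<longrightarrow> A \<beta> = 1)"
proof -
  define x0 where "x0 = Tm d \<pi> f \<alpha>0"
  define S where "S = (\<Sum>i<d. x0 ! i)"
  have x0i: "x0 \<in> idx d" unfolding x0_def using Tm_idx[OF hp hf a0] .
  have x0lt: "\<And>l. l < d \<Longrightarrow> x0 ! l < 4" using x0i unfolding idx_def by auto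
  obtain k where k: "d = 2*k + 1" using od by (rule oddE)
  define m where "m = k - 1"
  have dm: "d = 3 + 2*m" unfolding m_def using k d3 by linarith
  have dp: "d > 0" using d3 by simp
  obtain q where q: "S = 4*q + 2" using decS[of S] r2 unfolding S_def x0_def by auto
  define w where "w = (\<lambda>j. map (\<lambda>i. (x0!i + cc j i) mod 4) [0..<d])"
  have wi: "w j \<in> idx d" for j unfolding w_def idx_def by auto
  have wm: "M4 d (w j) = 1" if j: "j \<in> {1,2,3}" for j
  proof -
    have "(\<Sum>i<d. w j ! i) mod 4 = (\<Sum>i<d. (x0!i + cc j i) mod 4) mod 4"
      unfolding w_def sum_map by simp
    also have "\<dots> = (\<Sum>i<d. (x0!i + cc j i)) mod 4" by (rule mod_sum_eq)
    also have "(\<Sum>i<d. (x0!i + cc j i)) = S + (6 + 4*m)"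
      unfolding S_def sum.distrib using cc_sum[OF j, of m] dm by simp
    also have "S + (6 + 4*m) = 4*(q + 2 + m)" using q by simp
    finally have "(\<Sum>i<d. w j ! i) mod 4 = 0" by simp
    then show ?thesis unfolding M4_eq by simp
  qed
  have wd0: "\<forall>i<d. x0 ! i \<noteq> w j ! i" if j: "j \<in> {1,2,3}" for j
    unfolding w_def using md1 x0lt cc_range[OF j] by simp
  have wd: "\<forall>i<d. w j ! i \<noteq> w k ! i" if j: "j \<in> {1,2,3}" and kk: "k \<in> {1,2,3}" and jk: "j \<noteq> k" for j k
    unfolding w_def using md2 x0lt cc_range[OF j] cc_range[OF kk] cc_inj[OF j kk jk] by simp
  have dif: "\<forall>l<d. u!l \<noteq> v!l" if "Tm d \<pi> f u = U" "Tm d \<pi> f v = V" "\<forall>i<d. U!i \<noteq> V!i" for u v U V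
    using Tm_diff[OF hp] that by blast
  obtain b1 where b1: "b1 \<in> idx d" "Tm d \<pi> f b1 = w 1" using Tm_surj[OF hp hf wi[of 1]] by auto
  obtain b2 where b2: "b2 \<in> idx d" "Tm d \<pi> f b2 = w 2" using Tm_surj[OF hp hf wi[of 2]] by auto
  obtain b3 where b3: "b3 \<in> idx d" "Tm d \<pi> f b3 = w 3" using Tm_surj[OF hp hf wi[of 3]] by auto
  have ta: "Tm d \<pi> f \<alpha>0 = x0" unfolding x0_def ..
  have D: "{\<alpha>0, b1, b2, b3} \<in> diagonals d"
  proof (rule diag4[OF dp a0 b1(1) b2(1) b3(1)])
    show "\<forall>i<d. \<alpha>0 ! i \<noteq> b1 ! i" by (rule dif[OF ta b1(2) wd0]) simp
    show "\<forall>i<d. \<alpha>0 ! i \<noteq> b2 ! i" by (rule dif[OF ta b2(2) wd0]) simp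
    show "\<forall>i<d. \<alpha>0 ! i \<noteq> b3 ! i" by (rule dif[OF ta b3(2) wd0]) simp
    show "\<forall>i<d. b1 ! i \<noteq> b2 ! i" by (rule dif[OF b1(2) b2(2) wd]) simp_all
    show "\<forall>i<d. b1 ! i \<noteq> b3 ! i" by (rule dif[OF b1(2) b3(2) wd]) simp_all
    show "\<forall>i<d. b2 ! i \<noteq> b3 ! i" by (rule dif[OF b2(2) b3(2) wd]) simp_all
  qed
  have "A b1 = 1" "A b2 = 1" "A b3 = 1" using h3 b1 b2 b3 wm by simp_all
  then have "\<forall>\<beta>\<in>{\<alpha>0, b1, b2, b3}. \<beta> \<noteq> \<alpha>0 \<longrightarrow> A \<beta> = 1" by auto
  then show ?thesis using D by blast
qed


theorem mainTheorem10:
  fixes d :: nat and A :: "nat list \<Rightarrow> nat" and E :: "nat list" and lam :: "nat list \<Rightarrow> nat"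
    and s :: nat and y :: "nat list" and \<alpha>0 :: "nat list"
  assumes "d \<ge> 3"
    and "equivM4 d A"
    and "valid_params d E lam s"
    and "\<forall>\<alpha>\<in>idx d. A \<alpha> = block_perm d E lam s \<alpha>"
    and "filled d s y"
    and "\<alpha>0 \<in> subcube d E y"
    and "A \<alpha>0 = 0"
  shows "per d (A(\<alpha>0 := 1)) > 0"
proof -
  obtain \<pi> f where hp: "\<pi> permutes {..<d}" and hf: "\<forall>j<d. f j permutes {..<4}"
    and h3: "\<forall>\<alpha>\<in>idx d. A \<alpha> = M4 d (Tm d \<pi> f \<alpha>)"
    using equiv_nf[OF assms(2)] by blast
  have a0: "\<alpha>0 \<in> idx d" using assms(6) unfolding subcube_def by auto
  have pe: "PS d E \<alpha>0 = (\<Sum>i<d. y ! i)"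
    unfolding PS_def using assms(6) unfolding subcube_def by (intro sum.cong) auto
  have P0: "PS d E \<alpha>0 mod 2 = s" using pe assms(5) unfolding filled_def by simp
  have "block_perm d E lam s \<alpha>0 = 0" using assms(4,7) a0 by simp
  then have M0: "(MS d E \<alpha>0 + lam (pvec d E \<alpha>0)) mod 2 \<noteq> 0" unfolding bp_eq using P0
    by (auto split: if_splits)
  show ?thesis
  proof (cases "even d")
    case True
    obtain D where D: "D \<in> diagonals d" "\<forall>\<beta>\<in>D. A \<beta> = 1 \<and> \<beta> \<noteq> \<alpha>0"
      using even_case[OF hp hf h3 True _ assms(7)] assms(1) by auto
    have "\<forall>\<beta>\<in>D. (A(\<alpha>0 := 1)) \<beta> > 0" using D(2) by auto
    then show ?thesis using per_pos[OF D(1)] by blast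
  next
    case False
    have good: "A (\<alpha>0[i:=a, j:=b, k:=c]) = 1"
      if "i<d" "j<d" "k<d" "i\<noteq>j" "i\<noteq>k" "j\<noteq>k" "a<4" "b<4" "c<4"
         "A (\<alpha>0[i:=a]) = 1" "A (\<alpha>0[j:=b]) = 1" "A (\<alpha>0[k:=c]) = 1" for i j k a b c
      by (rule triple[OF assms(4) a0 P0 M0 that])
    have r2: "(\<Sum>i<d. Tm d \<pi> f \<alpha>0 ! i) mod 4 = 2"
      by (rule odd_r2[OF hp hf h3 assms(1) a0 assms(7) good])
    obtain D where D: "D \<in> diagonals d" "\<alpha>0 \<in> D" "\<forall>\<beta>\<in>D. \<beta> \<noteq> \<alpha>0 \<longrightarrow> A \<beta> = 1"
      using odd_case[OF hp hf h3 False assms(1) a0 r2] by blast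
    have "\<forall>\<beta>\<in>D. (A(\<alpha>0 := 1)) \<beta> > 0" using D(3) by auto
    then show ?thesis using per_pos[OF D(1)] by blast
  qed
qed

end
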